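(* The total wave-fluid potential vorticity obeys $$(\partial_t+\mathcal{L}_{\widehat{\mathbf{v}}})\Big(\mathrm{curl}\,\widehat{\mathbf{v}}+\nabla\widetilde{w}\times\nabla\zeta\Big)\cdot d\mathbf{S}=-\nabla\rho^{-1}\times\nabla p\cdot d\mathbf{S}.$$ Introducing a stream function $\psi$ with $\widehat{\mathbf{v}}=\widehat{\mathbf{z}}\times\nabla\psi$, the 2D Laplacian $\Delta$ and the Jacobian $J(a,b):=\widehat{\mathbf{z}}\cdot\nabla a\times\nabla b$, this reads $$\partial_tq+J(\psi,q)=-J(\rho^{-1},\nabla p),\qquad q:=\Delta\psi+J(\widetilde{w},\zeta).$$
   Context: On a free surface $z=\zeta(\mathbf{x},t)$ over horizontal coordinates $\mathbf{x}=(x,y)$, the WCIFS (wave-current interaction on a free surface) equations govern the horizontal velocity $\widehat{\mathbf{v}}$, areal density $D$ (constrained to $D=1$ by the pressure $p$, so $\mathrm{div}\,\widehat{\mathbf{v}}=0$), buoyancy $\rho$, elevation $\zeta$ and vertical velocity $\widehat{w}$: $(\partial_t+\mathcal{L}_{\widehat{\mathbf{v}}})(\widehat{\mathbf{v}}\cdot d\mathbf{x}+\widetilde{w}\,d\zeta)=d\varpi-\frac1\rho dp$; $\partial_tD+\mathrm{div}(D\widehat{\mathbf{v}})=0$; $\partial_t\rho+\widehat{\mathbf{v}}\cdot\nabla\rho=0$; $\partial_t\zeta+\widehat{\mathbf{v}}\cdot\nabla\zeta=\widehat{w}(1+\epsilon|\nabla\zeta|^2)$; $\partial_t\widetilde{w}+\widehat{\mathbf{v}}\cdot\nabla\widetilde{w}=-g+\frac{2\epsilon}{D\rho}\mathrm{div}(\widehat{w}\,\widetilde{\mu}\,\nabla\zeta)$,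 with $\varpi=\tfrac12(|\widehat{\mathbf{v}}|^2+\widehat{w}^2)-g\zeta$, $\widetilde{\mu}=D\rho\widetilde{w}$, $\widetilde{w}=\widehat{w}/(1+\epsilon|\nabla\zeta|^2)$. $\mathcal{L}_{\widehat{\mathbf{v}}}$ is the Lie derivative along $\widehat{\mathbf{v}}$. *)

theory Defs
  imports "HOL-Analysis.Analysis"
begin

text \<open>Scalar fields on space-time: f t x y, with t time and (x,y) horizontal coordinates.\<close>
type_synonym field = "real \<Rightarrow> real \<Rightarrow> real \<Rightarrow> real"

definition pt :: "field \<Rightarrow> field" where
  "pt f = (\<lambda>t x y. deriv (\<lambda>s. f s x y) t)"
definition px :: "field \<Rightarrow> field" where
  "px f = (\<lambda>t x y. deriv (\<lambda>s. f t s y) x)"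
definition py :: "field \<Rightarrow> field" where
  "py f = (\<lambda>t x y. deriv (\<lambda>s. f t x s) y)"

fun Ck :: "nat \<Rightarrow> field \<Rightarrow> bool" where
  "Ck 0 f = continuous_on UNIV (\<lambda>(t, x, y). f t x y)"
| "Ck (Suc k) f = (continuous_on UNIV (\<lambda>(t, x, y). f t x y) \<and>
     (\<forall>t x y. (\<lambda>s. f s x y) differentiable (at t) \<and>
              (\<lambda>s. f t s y) differentiable (at x) \<and>
              (\<lambda>s. f t x s) differentiable (at y)) \<and>
     Ck k (pt f) \<and> Ck k (px f) \<and> Ck k (py f))"

definition smooth :: "field \<Rightarrow> bool" where
  "smooth f = (\<forall>k. Ck k f)"

definition adv :: "field \<Rightarrow> field \<Rightarrow> field \<Rightarrow> field" where
  "adv u1 u2 f = (\<lambda>t x y. u1 t x y * px f t x y + u2 t x y * py f t x y)"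

text \<open>Lie derivative along v=(u1,u2) of the 1-form a1 dx + a2 dy, x- and y-components.\<close>
definition lie1x :: "field \<Rightarrow> field \<Rightarrow> field \<Rightarrow> field \<Rightarrow> field" where
  "lie1x u1 u2 a1 a2 = (\<lambda>t x y. adv u1 u2 a1 t x y + a1 t x y * px u1 t x y + a2 t x y * px u2 t x y)"
definition lie1y :: "field \<Rightarrow> field \<Rightarrow> field \<Rightarrow> field \<Rightarrow> field" where
  "lie1y u1 u2 a1 a2 = (\<lambda>t x y. adv u1 u2 a2 t x y + a1 t x y * py u1 t x y + a2 t x y * py u2 t x y)"

text \<open>Lie derivative along v=(u1,u2) of the 2-form f dS (coefficient of dS = dx wedge dy).\<close>
definition lie2 :: "field \<Rightarrow> field \<Rightarrow> field \<Rightarrow> field" where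
  "lie2 u1 u2 f = (\<lambda>t x y. adv u1 u2 f t x y + f t x y * (px u1 t x y + py u2 t x y))"

definition curl :: "field \<Rightarrow> field \<Rightarrow> field" where
  "curl u1 u2 = (\<lambda>t x y. px u2 t x y - py u1 t x y)"
definition jac :: "field \<Rightarrow> field \<Rightarrow> field" where
  "jac a b = (\<lambda>t x y. px a t x y * py b t x y - py a t x y * px b t x y)"
definition lap :: "field \<Rightarrow> field" where
  "lap f = (\<lambda>t x y. px (px f) t x y + py (py f) t x y)"

end

theory Submission
  imports Defs
begin


lemma dd: fixes f :: "real \<Rightarrow> real" shows "f differentiable at x \<Longrightarrow> DERIV f x :> deriv f x"
  using DERIV_deriv_iff_real_differentiable by blast

lemma deriv_add': fixes f g :: "real \<Rightarrow> real"
  shows "f differentiable at x \<Longrightarrow> g differentiable at x \<Longrightarrow> deriv (\<lambda>s. f s + g s) x = deriv f x + deriv g x"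
  by (intro DERIV_imp_deriv derivative_intros dd)
lemma deriv_diff': fixes f g :: "real \<Rightarrow> real"
  shows "f differentiable at x \<Longrightarrow> g differentiable at x \<Longrightarrow> deriv (\<lambda>s. f s - g s) x = deriv f x - deriv g x"
  by (intro DERIV_imp_deriv derivative_intros dd)
lemma deriv_mult': fixes f g :: "real \<Rightarrow> real"
  shows "f differentiable at x \<Longrightarrow> g differentiable at x \<Longrightarrow> deriv (\<lambda>s. f s * g s) x = deriv f x * g x + f x * deriv g x"
  using DERIV_imp_deriv[OF DERIV_mult[OF dd[of f] dd[of g]]] by (simp add: mult.commute)
lemma deriv_inv': fixes f :: "real \<Rightarrow> real"
  shows "f differentiable at x \<Longrightarrow> f x \<noteq> 0 \<Longrightarrow> deriv (\<lambda>s. 1 / f s) x = (-1 * deriv f x) * (1 / f x) * (1 / f x)"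
  using DERIV_imp_deriv[OF DERIV_inverse'[OF dd[of f]]] by (simp add: inverse_eq_divide)
lemma deriv_const': "deriv (\<lambda>s::real. c) x = (0::real)"
  by simp

lemma diff_add: fixes f g :: "real \<Rightarrow> real"
  shows "f differentiable at x \<Longrightarrow> g differentiable at x \<Longrightarrow> (\<lambda>s. f s + g s) differentiable at x"
  by (rule differentiable_add)
lemma diff_mult: fixes f g :: "real \<Rightarrow> real"
  shows "f differentiable at x \<Longrightarrow> g differentiable at x \<Longrightarrow> (\<lambda>s. f s * g s) differentiable at x"
  by (rule differentiable_mult)
lemma diff_inv: fixes f :: "real \<Rightarrow> real"
  shows "f differentiable at x \<Longrightarrow> f x \<noteq> 0 \<Longrightarrow> (\<lambda>s. 1 / f s) differentiable at x"
proof -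
  assume a: "f differentiable at x" "f x \<noteq> 0"
  have "DERIV (\<lambda>s. inverse (f s)) x :> - (inverse (f x) * deriv f x * inverse (f x))"
    using DERIV_inverse'[OF dd[OF a(1)] a(2)] .
  then show ?thesis unfolding real_differentiable_def inverse_eq_divide by blast
qed

lemma cont_add: "continuous_on UNIV (\<lambda>(t, x, y). f t x y) \<Longrightarrow> continuous_on UNIV (\<lambda>(t, x, y). g t x y)
  \<Longrightarrow> continuous_on UNIV (\<lambda>(t, x, y). f t x y + (g t x y :: real))"
  using continuous_on_add[of UNIV "\<lambda>(t, x, y). f t x y" "\<lambda>(t, x, y). g t x y"]
  by (simp add: case_prod_unfold)
lemma cont_mult: "continuous_on UNIV (\<lambda>(t, x, y). f t x y) \<Longrightarrow> continuous_on UNIV (\<lambda>(t, x, y). g t x y)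
  \<Longrightarrow> continuous_on UNIV (\<lambda>(t, x, y). f t x y * (g t x y :: real))"
  using continuous_on_mult[of UNIV "\<lambda>(t, x, y). f t x y" "\<lambda>(t, x, y). g t x y"]
  by (simp add: case_prod_unfold)
lemma cont_inv: "continuous_on UNIV (\<lambda>(t, x, y). f t x y) \<Longrightarrow> \<forall>t x y. f t x y \<noteq> (0::real)
  \<Longrightarrow> continuous_on UNIV (\<lambda>(t, x, y). 1 / f t x y)"
  using continuous_on_divide[of UNIV "\<lambda>_. 1" "\<lambda>(t, x, y). f t x y"]
  by (auto simp add: case_prod_unfold)

lemma Ck_mono: "Ck (Suc k) f \<Longrightarrow> Ck k f"
proof (induction k arbitrary: f)
  case 0 then show ?case by simp
next
  case (Suc k)
  then show ?case unfolding Ck.simps by blast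
qed

lemma pt_add: "(\<forall>t x y. (\<lambda>s. f s x y) differentiable (at t)) \<Longrightarrow> (\<forall>t x y. (\<lambda>s. g s x y) differentiable (at t)) \<Longrightarrow>
  pt (\<lambda>t x y. f t x y + g t x y) = (\<lambda>t x y. pt f t x y + pt g t x y)"
  by (simp add: pt_def deriv_add')
lemma px_add: "(\<forall>t x y. (\<lambda>s. f t s y) differentiable (at x)) \<Longrightarrow> (\<forall>t x y. (\<lambda>s. g t s y) differentiable (at x)) \<Longrightarrow>
  px (\<lambda>t x y. f t x y + g t x y) = (\<lambda>t x y. px f t x y + px g t x y)"
  by (simp add: px_def deriv_add')
lemma py_add: "(\<forall>t x y. (\<lambda>s. f t x s) differentiable (at y)) \<Longrightarrow> (\<forall>t x y. (\<lambda>s. g t x s) differentiable (at y)) \<Longrightarrow>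
  py (\<lambda>t x y. f t x y + g t x y) = (\<lambda>t x y. py f t x y + py g t x y)"
  by (simp add: py_def deriv_add')
lemma pt_mult: "(\<forall>t x y. (\<lambda>s. f s x y) differentiable (at t)) \<Longrightarrow> (\<forall>t x y. (\<lambda>s. g s x y) differentiable (at t)) \<Longrightarrow>
  pt (\<lambda>t x y. f t x y * g t x y) = (\<lambda>t x y. pt f t x y * g t x y + f t x y * pt g t x y)"
  by (simp add: pt_def deriv_mult')
lemma px_mult: "(\<forall>t x y. (\<lambda>s. f t s y) differentiable (at x)) \<Longrightarrow> (\<forall>t x y. (\<lambda>s. g t s y) differentiable (at x)) \<Longrightarrow>
  px (\<lambda>t x y. f t x y * g t x y) = (\<lambda>t x y. px f t x y * g t x y + f t x y * px g t x y)"
  by (simp add: px_def deriv_mult')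
lemma py_mult: "(\<forall>t x y. (\<lambda>s. f t x s) differentiable (at y)) \<Longrightarrow> (\<forall>t x y. (\<lambda>s. g t x s) differentiable (at y)) \<Longrightarrow>
  py (\<lambda>t x y. f t x y * g t x y) = (\<lambda>t x y. py f t x y * g t x y + f t x y * py g t x y)"
  by (simp add: py_def deriv_mult')
lemma pt_inv: "(\<forall>t x y. (\<lambda>s. f s x y) differentiable (at t)) \<Longrightarrow> \<forall>t x y. f t x y \<noteq> 0 \<Longrightarrow>
  pt (\<lambda>t x y. 1 / f t x y) = (\<lambda>t x y. (-1 * pt f t x y) * (1 / f t x y) * (1 / f t x y))"
  unfolding pt_def by (intro ext deriv_inv') blast+
lemma px_inv: "(\<forall>t x y. (\<lambda>s. f t s y) differentiable (at x)) \<Longrightarrow> \<forall>t x y. f t x y \<noteq> 0 \<Longrightarrow>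
  px (\<lambda>t x y. 1 / f t x y) = (\<lambda>t x y. (-1 * px f t x y) * (1 / f t x y) * (1 / f t x y))"
  unfolding px_def by (intro ext deriv_inv') blast+
lemma py_inv: "(\<forall>t x y. (\<lambda>s. f t x s) differentiable (at y)) \<Longrightarrow> \<forall>t x y. f t x y \<noteq> 0 \<Longrightarrow>
  py (\<lambda>t x y. 1 / f t x y) = (\<lambda>t x y. (-1 * py f t x y) * (1 / f t x y) * (1 / f t x y))"
  unfolding py_def by (intro ext deriv_inv') blast+
lemma pt_const: "pt (\<lambda>t x y. c) = (\<lambda>t x y. 0)" by (simp add: pt_def)
lemma px_const: "px (\<lambda>t x y. c) = (\<lambda>t x y. 0)" by (simp add: px_def)
lemma py_const: "py (\<lambda>t x y. c) = (\<lambda>t x y. 0)" by (simp add: py_def)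

lemma Ck_const: "Ck k (\<lambda>t x y. c)"
proof (induction k arbitrary: c)
  case 0 then show ?case by simp
next
  case (Suc k) then show ?case unfolding Ck.simps pt_const px_const py_const by simp
qed

lemma Ck_add: "Ck k f \<Longrightarrow> Ck k g \<Longrightarrow> Ck k (\<lambda>t x y. f t x y + g t x y)"
proof (induction k arbitrary: f g)
  case 0 then show ?case by (simp add: cont_add)
next
  case (Suc k)
  have df: "\<forall>t x y. (\<lambda>s. f s x y) differentiable (at t) \<and>
              (\<lambda>s. f t s y) differentiable (at x) \<and> (\<lambda>s. f t x s) differentiable (at y)"
    "\<forall>t x y. (\<lambda>s. g s x y) differentiable (at t) \<and>
              (\<lambda>s. g t s y) differentiable (at x) \<and> (\<lambda>s. g t x s) differentiable (at y)"
    using Suc.prems by simp_all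
  have 1: "pt (\<lambda>t x y. f t x y + g t x y) = (\<lambda>t x y. pt f t x y + pt g t x y)"
    using pt_add df by blast
  have 2: "px (\<lambda>t x y. f t x y + g t x y) = (\<lambda>t x y. px f t x y + px g t x y)"
    using px_add df by blast
  have 3: "py (\<lambda>t x y. f t x y + g t x y) = (\<lambda>t x y. py f t x y + py g t x y)"
    using py_add df by blast
  have c: "continuous_on UNIV (\<lambda>(t, x, y). f t x y)" "continuous_on UNIV (\<lambda>(t, x, y). g t x y)"
    using Suc.prems by simp_all
  have d: "Ck k (pt f)" "Ck k (px f)" "Ck k (py f)" "Ck k (pt g)" "Ck k (px g)" "Ck k (py g)"
    using Suc.prems by simp_all
  show ?case unfolding Ck.simps 1 2 3
  proof (intro conjI allI)
    show "continuous_on UNIV (\<lambda>(t, x, y). f t x y + g t x y)" using cont_add[OF c] .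
  next
    fix t x y
    show "(\<lambda>s. f s x y + g s x y) differentiable at t" using diff_add df by blast
    show "(\<lambda>s. f t s y + g t s y) differentiable at x" using diff_add df by blast
    show "(\<lambda>s. f t x s + g t x s) differentiable at y" using diff_add df by blast
  qed (rule Suc.IH[OF d(1) d(4)] Suc.IH[OF d(2) d(5)] Suc.IH[OF d(3) d(6)])+
qed

lemma Ck_mult: "Ck k f \<Longrightarrow> Ck k g \<Longrightarrow> Ck k (\<lambda>t x y. f t x y * g t x y)"
proof (induction k arbitrary: f g)
  case 0 then show ?case by (simp add: cont_mult)
next
  case (Suc k)
  have m: "Ck k f" "Ck k g" using Suc.prems Ck_mono by blast+
  have df: "\<forall>t x y. (\<lambda>s. f s x y) differentiable (at t) \<and>
              (\<lambda>s. f t s y) differentiable (at x) \<and> (\<lambda>s. f t x s) differentiable (at y)"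
    "\<forall>t x y. (\<lambda>s. g s x y) differentiable (at t) \<and>
              (\<lambda>s. g t s y) differentiable (at x) \<and> (\<lambda>s. g t x s) differentiable (at y)"
    using Suc.prems by simp_all
  have 1: "pt (\<lambda>t x y. f t x y * g t x y) = (\<lambda>t x y. pt f t x y * g t x y + f t x y * pt g t x y)"
    using pt_mult df by blast
  have 2: "px (\<lambda>t x y. f t x y * g t x y) = (\<lambda>t x y. px f t x y * g t x y + f t x y * px g t x y)"
    using px_mult df by blast
  have 3: "py (\<lambda>t x y. f t x y * g t x y) = (\<lambda>t x y. py f t x y * g t x y + f t x y * py g t x y)"
    using py_mult df by blast
  have c: "continuous_on UNIV (\<lambda>(t, x, y). f t x y)" "continuous_on UNIV (\<lambda>(t, x, y). g t x y)"
    using Suc.prems by simp_all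
  have d: "Ck k (pt f)" "Ck k (px f)" "Ck k (py f)" "Ck k (pt g)" "Ck k (px g)" "Ck k (py g)"
    using Suc.prems by simp_all
  have e: "Ck k (\<lambda>t x y. h1 t x y * g t x y + f t x y * h2 t x y)" if "Ck k h1" "Ck k h2" for h1 h2
    by (rule Ck_add; rule Suc.IH) (use that m in auto)
  show ?case unfolding Ck.simps 1 2 3
  proof (intro conjI allI)
    show "continuous_on UNIV (\<lambda>(t, x, y). f t x y * g t x y)" using cont_mult[OF c] .
  next
    fix t x y
    show "(\<lambda>s. f s x y * g s x y) differentiable at t" using diff_mult df by blast
    show "(\<lambda>s. f t s y * g t s y) differentiable at x" using diff_mult df by blast
    show "(\<lambda>s. f t x s * g t x s) differentiable at y" using diff_mult df by blast
  qed (rule e[OF d(1) d(4)] e[OF d(2) d(5)] e[OF d(3) d(6)])+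
qed

lemma Ck_inv: "Ck k f \<Longrightarrow> \<forall>t x y. f t x y \<noteq> 0 \<Longrightarrow> Ck k (\<lambda>t x y. 1 / f t x y)"
proof (induction k arbitrary: f)
  case 0 then show ?case by (simp add: cont_inv)
next
  case (Suc k)
  have m: "Ck k f" using Suc.prems Ck_mono by blast
  have i: "Ck k (\<lambda>t x y. 1 / f t x y)" using Suc.IH m Suc.prems by blast
  have d: "Ck k (pt f)" "Ck k (px f)" "Ck k (py f)" using Suc.prems by auto
  have e: "Ck k (\<lambda>t x y. (-1 * h t x y) * (1 / f t x y) * (1 / f t x y))" if "Ck k h" for h
    by (intro Ck_mult Ck_const i that)
  have nz: "\<forall>t x y. f t x y \<noteq> 0" using Suc.prems by blast
  have c: "continuous_on UNIV (\<lambda>(t, x, y). f t x y)" using Suc.prems by simp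
  have df: "\<forall>t x y. (\<lambda>s. f s x y) differentiable (at t) \<and>
              (\<lambda>s. f t s y) differentiable (at x) \<and> (\<lambda>s. f t x s) differentiable (at y)"
    using Suc.prems by simp
  have 1: "pt (\<lambda>t x y. 1 / f t x y) = (\<lambda>t x y. (-1 * pt f t x y) * (1 / f t x y) * (1 / f t x y))"
    using pt_inv df nz by blast
  have 2: "px (\<lambda>t x y. 1 / f t x y) = (\<lambda>t x y. (-1 * px f t x y) * (1 / f t x y) * (1 / f t x y))"
    using px_inv df nz by blast
  have 3: "py (\<lambda>t x y. 1 / f t x y) = (\<lambda>t x y. (-1 * py f t x y) * (1 / f t x y) * (1 / f t x y))"
    using py_inv df nz by blast
  show ?case unfolding Ck.simps 1 2 3
  proof (intro conjI allI)
    show "continuous_on UNIV (\<lambda>(t, x, y). 1 / f t x y)" using cont_inv[OF c nz] .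
  next
    fix t x y
    show "(\<lambda>s. 1 / f s x y) differentiable at t" using diff_inv df nz by blast
    show "(\<lambda>s. 1 / f t s y) differentiable at x" using diff_inv df nz by blast
    show "(\<lambda>s. 1 / f t x s) differentiable at y" using diff_inv df nz by blast
  qed (rule e[OF d(1)] e[OF d(2)] e[OF d(3)])+
qed



lemma abs_aux: "\<bar>p - u\<bar> < \<bar>u - v\<bar> / 2 \<Longrightarrow> \<bar>q - v\<bar> < \<bar>u - v\<bar> / 2 \<Longrightarrow> p = q \<Longrightarrow> False"
  for p q u v :: real
  by (simp add: abs_if split: if_splits)

lemma schwarz:
  fixes F :: "real \<Rightarrow> real \<Rightarrow> real"
  assumes d1: "\<And>a b. (\<lambda>s. F s b) differentiable at a"
  and d2: "\<And>a b. (\<lambda>s. F a s) differentiable at b"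
  and d12: "\<And>a b. (\<lambda>s. deriv (\<lambda>r. F r s) a) differentiable at b"
  and d21: "\<And>a b. (\<lambda>s. deriv (\<lambda>r. F s r) b) differentiable at a"
  and c12: "continuous_on UNIV (\<lambda>(a, b). deriv (\<lambda>s. deriv (\<lambda>r. F r s) a) b)"
  and c21: "continuous_on UNIV (\<lambda>(a, b). deriv (\<lambda>s. deriv (\<lambda>r. F s r) b) a)"
  shows "deriv (\<lambda>s. deriv (\<lambda>r. F r s) x) y = deriv (\<lambda>s. deriv (\<lambda>r. F s r) y) x"
proof -
  define F1 where "F1 a b = deriv (\<lambda>r. F r b) a" for a b
  define F2 where "F2 a b = deriv (\<lambda>r. F a r) b" for a b
  define F12 where "F12 a b = deriv (\<lambda>s. F1 a s) b" for a b
  define F21 where "F21 a b = deriv (\<lambda>s. F2 s b) a" for a b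
  have key: "\<exists>a b a' b'. \<bar>a - x\<bar> < h \<and> \<bar>b - y\<bar> < h \<and> \<bar>a' - x\<bar> < h \<and> \<bar>b' - y\<bar> < h
              \<and> F12 a b = F21 a' b'" if h: "h > 0" for h
  proof -
    have "\<exists>z. x < z \<and> z < x + h \<and> (F (x+h) (y+h) - F (x+h) y) - (F x (y+h) - F x y)
        = (x + h - x) * (F1 z (y+h) - F1 z y)"
      by (rule MVT2[where f="\<lambda>s. F s (y+h) - F s y" and f'="\<lambda>s. F1 s (y+h) - F1 s y"])
         (use h in \<open>auto simp: F1_def intro!: DERIV_diff dd d1\<close>)
    then obtain a where a: "x < a" "a < x + h"
      "(F (x+h) (y+h) - F (x+h) y) - (F x (y+h) - F x y) = h * (F1 a (y+h) - F1 a y)" by auto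
    have "\<exists>z. y < z \<and> z < y + h \<and> F1 a (y+h) - F1 a y = (y + h - y) * F12 a z"
      by (rule MVT2[where f="\<lambda>s. F1 a s" and f'="\<lambda>s. F12 a s"])
         (use h in \<open>auto simp: F1_def F12_def intro!: dd d12\<close>)
    then obtain b where b: "y < b" "b < y + h" "F1 a (y+h) - F1 a y = h * F12 a b" by auto
    have "\<exists>z. y < z \<and> z < y + h \<and> (F (x+h) (y+h) - F x (y+h)) - (F (x+h) y - F x y)
        = (y + h - y) * (F2 (x+h) z - F2 x z)"
      by (rule MVT2[where f="\<lambda>s. F (x+h) s - F x s" and f'="\<lambda>s. F2 (x+h) s - F2 x s"])
         (use h in \<open>auto simp: F2_def intro!: DERIV_diff dd d2\<close>)
    then obtain b' where b': "y < b'" "b' < y + h"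
      "(F (x+h) (y+h) - F x (y+h)) - (F (x+h) y - F x y) = h * (F2 (x+h) b' - F2 x b')" by auto
    have "\<exists>z. x < z \<and> z < x + h \<and> F2 (x+h) b' - F2 x b' = (x + h - x) * F21 z b'"
      by (rule MVT2[where f="\<lambda>s. F2 s b'" and f'="\<lambda>s. F21 s b'"])
         (use h in \<open>auto simp: F2_def F21_def intro!: dd d21\<close>)
    then obtain a' where a': "x < a'" "a' < x + h" "F2 (x+h) b' - F2 x b' = h * F21 a' b'" by auto
    have "h * (h * F12 a b) = h * (h * F21 a' b')"
      using a(3) b(3) b'(3) a'(3) by (simp add: algebra_simps)
    then have "F12 a b = F21 a' b'" using h by simp
    then show ?thesis using a b a' b' by (intro exI[of _ a] exI[of _ b] exI[of _ a'] exI[of _ b']) auto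
  qed
  have i12: "isCont (\<lambda>(a, b). F12 a b) (x, y)"
    using c12 unfolding F12_def F1_def by (simp add: continuous_on_eq_continuous_at)
  have i21: "isCont (\<lambda>(a, b). F21 a b) (x, y)"
    using c21 unfolding F21_def F2_def by (simp add: continuous_on_eq_continuous_at)
  have "F12 x y = F21 x y"
  proof (rule ccontr)
    assume ne: "F12 x y \<noteq> F21 x y"
    define e where "e = \<bar>F12 x y - F21 x y\<bar> / 2"
    have e: "e > 0" using ne by (simp add: e_def)
    obtain da where da: "da > 0" "\<And>p. dist p (x, y) < da \<Longrightarrow> dist ((\<lambda>(a, b). F12 a b) p) (F12 x y) < e"
      using i12 e unfolding continuous_at_eps_delta by fastforce
    obtain db where db: "db > 0" "\<And>p. dist p (x, y) < db \<Longrightarrow> dist ((\<lambda>(a, b). F21 a b) p) (F21 x y) < e"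
      using i21 e unfolding continuous_at_eps_delta by fastforce
    define h where "h = min da db / 2"
    have h: "h > 0" using da db by (simp add: h_def)
    obtain a b a' b' where ab: "\<bar>a - x\<bar> < h" "\<bar>b - y\<bar> < h" "\<bar>a' - x\<bar> < h" "\<bar>b' - y\<bar> < h"
      "F12 a b = F21 a' b'" using key[OF h] by blast
    have dpair: "dist (p, q) (x, y) < 2 * h" if "\<bar>p - x\<bar> < h" "\<bar>q - y\<bar> < h" for p q
    proof -
      have "dist (p, q) (x, y) = sqrt ((p - x)\<^sup>2 + (q - y)\<^sup>2)"
        by (simp add: dist_Pair_Pair dist_real_def)
      also have "\<dots> \<le> \<bar>p - x\<bar> + \<bar>q - y\<bar>" by (rule sqrt_sum_squares_le_sum_abs)
      finally show ?thesis using that by simp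
    qed
    have "dist (F12 a b) (F12 x y) < e"
      using da(2)[of "(a, b)"] dpair[OF ab(1,2)] by (simp add: h_def)
    moreover have "dist (F21 a' b') (F21 x y) < e"
      using db(2)[of "(a', b')"] dpair[OF ab(3,4)] by (simp add: h_def)
    ultimately show False using ab(5) abs_aux unfolding e_def dist_real_def by blast
  qed
  then show ?thesis unfolding F12_def F21_def F1_def F2_def .
qed



lemma deriv_divc': fixes f :: "real \<Rightarrow> real"
  shows "f differentiable at x \<Longrightarrow> deriv (\<lambda>s. f s / c) x = deriv f x / c"
  using DERIV_imp_deriv[OF DERIV_cdivide[OF dd[of f]]] by simp
lemma deriv_neg': fixes f :: "real \<Rightarrow> real"
  shows "f differentiable at x \<Longrightarrow> deriv (\<lambda>s. - f s) x = - deriv f x"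
  using DERIV_imp_deriv[OF DERIV_minus[OF dd[of f]]] by simp

lemma smooth_Ck: "smooth f \<Longrightarrow> Ck k f" unfolding smooth_def by blast
lemma smooth_pt[simp]: "smooth f \<Longrightarrow> smooth (pt f)"
  unfolding smooth_def by (metis Ck.simps(2))
lemma smooth_px[simp]: "smooth f \<Longrightarrow> smooth (px f)"
  unfolding smooth_def by (metis Ck.simps(2))
lemma smooth_py[simp]: "smooth f \<Longrightarrow> smooth (py f)"
  unfolding smooth_def by (metis Ck.simps(2))
lemma smooth_cont: "smooth f \<Longrightarrow> continuous_on UNIV (\<lambda>(t, x, y). f t x y)"
  using smooth_Ck[of f 0] by simp
lemma smooth_dt: "smooth f \<Longrightarrow> (\<lambda>s. f s x y) differentiable (at t)"
  using smooth_Ck[of f 1] by simp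
lemma smooth_dx: "smooth f \<Longrightarrow> (\<lambda>s. f t s y) differentiable (at x)"
  using smooth_Ck[of f 1] by simp
lemma smooth_dy: "smooth f \<Longrightarrow> (\<lambda>s. f t x s) differentiable (at y)"
  using smooth_Ck[of f 1] by simp

lemma smooth_const[simp]: "smooth (\<lambda>t x y. c)"
  unfolding smooth_def using Ck_const by blast
lemma smooth_add[simp]: "smooth f \<Longrightarrow> smooth g \<Longrightarrow> smooth (\<lambda>t x y. f t x y + g t x y)"
  unfolding smooth_def using Ck_add by blast
lemma smooth_mult[simp]: "smooth f \<Longrightarrow> smooth g \<Longrightarrow> smooth (\<lambda>t x y. f t x y * g t x y)"
  unfolding smooth_def using Ck_mult by blast
lemma smooth_neg[simp]: "smooth f \<Longrightarrow> smooth (\<lambda>t x y. - f t x y)"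
proof -
  assume "smooth f"
  then have "smooth (\<lambda>t x y. (\<lambda>t x y. -1) t x y * f t x y)" by (intro smooth_mult smooth_const)
  then show ?thesis by simp
qed
lemma smooth_diff[simp]: "smooth f \<Longrightarrow> smooth g \<Longrightarrow> smooth (\<lambda>t x y. f t x y - g t x y)"
proof -
  assume "smooth f" "smooth g"
  then have "smooth (\<lambda>t x y. f t x y + (\<lambda>t x y. - g t x y) t x y)" by (intro smooth_add smooth_neg)
  then show ?thesis by simp
qed
lemma smooth_divc[simp]: "smooth f \<Longrightarrow> smooth (\<lambda>t x y. f t x y / c)"
proof -
  assume "smooth f"
  then have "smooth (\<lambda>t x y. f t x y * (\<lambda>t x y. 1 / c) t x y)" by (intro smooth_mult smooth_const)
  then show ?thesis by simp
qed
lemma smooth_inv: "smooth f \<Longrightarrow> \<forall>t x y. f t x y \<noteq> 0 \<Longrightarrow> smooth (\<lambda>t x y. 1 / f t x y)"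
  unfolding smooth_def using Ck_inv by blast

lemma pt_addP[simp]: "smooth f \<Longrightarrow> smooth g \<Longrightarrow> pt (\<lambda>t x y. f t x y + g t x y) t x y = pt f t x y + pt g t x y"
  unfolding pt_def by (intro deriv_add' smooth_dt)
lemma pt_diffP[simp]: "smooth f \<Longrightarrow> smooth g \<Longrightarrow> pt (\<lambda>t x y. f t x y - g t x y) t x y = pt f t x y - pt g t x y"
  unfolding pt_def by (intro deriv_diff' smooth_dt)
lemma pt_multP[simp]: "smooth f \<Longrightarrow> smooth g \<Longrightarrow> pt (\<lambda>t x y. f t x y * g t x y) t x y = pt f t x y * g t x y + f t x y * pt g t x y"
  unfolding pt_def by (intro deriv_mult' smooth_dt)
lemma pt_divcP[simp]: "smooth f \<Longrightarrow> pt (\<lambda>t x y. f t x y / c) t x y = pt f t x y / c"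
  unfolding pt_def by (intro deriv_divc' smooth_dt)
lemma pt_negP[simp]: "smooth f \<Longrightarrow> pt (\<lambda>t x y. - f t x y) t x y = - pt f t x y"
  unfolding pt_def by (intro deriv_neg' smooth_dt)
lemma pt_constP[simp]: "pt (\<lambda>t x y. c) t x y = 0"
  unfolding pt_def by simp

lemma px_addP[simp]: "smooth f \<Longrightarrow> smooth g \<Longrightarrow> px (\<lambda>t x y. f t x y + g t x y) t x y = px f t x y + px g t x y"
  unfolding px_def by (intro deriv_add' smooth_dx)
lemma px_diffP[simp]: "smooth f \<Longrightarrow> smooth g \<Longrightarrow> px (\<lambda>t x y. f t x y - g t x y) t x y = px f t x y - px g t x y"
  unfolding px_def by (intro deriv_diff' smooth_dx)
lemma px_multP[simp]: "smooth f \<Longrightarrow> smooth g \<Longrightarrow> px (\<lambda>t x y. f t x y * g t x y) t x y = px f t x y * g t x y + f t x y * px g t x y"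
  unfolding px_def by (intro deriv_mult' smooth_dx)
lemma px_divcP[simp]: "smooth f \<Longrightarrow> px (\<lambda>t x y. f t x y / c) t x y = px f t x y / c"
  unfolding px_def by (intro deriv_divc' smooth_dx)
lemma px_negP[simp]: "smooth f \<Longrightarrow> px (\<lambda>t x y. - f t x y) t x y = - px f t x y"
  unfolding px_def by (intro deriv_neg' smooth_dx)
lemma px_constP[simp]: "px (\<lambda>t x y. c) t x y = 0"
  unfolding px_def by simp

lemma py_addP[simp]: "smooth f \<Longrightarrow> smooth g \<Longrightarrow> py (\<lambda>t x y. f t x y + g t x y) t x y = py f t x y + py g t x y"
  unfolding py_def by (intro deriv_add' smooth_dy)
lemma py_diffP[simp]: "smooth f \<Longrightarrow> smooth g \<Longrightarrow> py (\<lambda>t x y. f t x y - g t x y) t x y = py f t x y - py g t x y"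
  unfolding py_def by (intro deriv_diff' smooth_dy)
lemma py_multP[simp]: "smooth f \<Longrightarrow> smooth g \<Longrightarrow> py (\<lambda>t x y. f t x y * g t x y) t x y = py f t x y * g t x y + f t x y * py g t x y"
  unfolding py_def by (intro deriv_mult' smooth_dy)
lemma py_divcP[simp]: "smooth f \<Longrightarrow> py (\<lambda>t x y. f t x y / c) t x y = py f t x y / c"
  unfolding py_def by (intro deriv_divc' smooth_dy)
lemma py_negP[simp]: "smooth f \<Longrightarrow> py (\<lambda>t x y. - f t x y) t x y = - py f t x y"
  unfolding py_def by (intro deriv_neg' smooth_dy)
lemma py_constP[simp]: "py (\<lambda>t x y. c) t x y = 0"
  unfolding py_def by simp

lemma cfix1: fixes G :: "real \<Rightarrow> real \<Rightarrow> real \<Rightarrow> real" shows "continuous_on UNIV (\<lambda>(t, x, y). G t x y) \<Longrightarrow> continuous_on UNIV (\<lambda>(a, b). (G t a b :: real))"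
proof -
  assume c: "continuous_on UNIV (\<lambda>(t, x, y). G t x y)"
  have "continuous_on UNIV (\<lambda>q::real\<times>real. (t, fst q, snd q))" by (intro continuous_intros)
  from continuous_on_compose2[OF c this] show ?thesis by (simp add: case_prod_unfold)
qed
lemma cfix2: fixes G :: "real \<Rightarrow> real \<Rightarrow> real \<Rightarrow> real" shows "continuous_on UNIV (\<lambda>(t, x, y). G t x y) \<Longrightarrow> continuous_on UNIV (\<lambda>(a, b). (G a x b :: real))"
proof -
  assume c: "continuous_on UNIV (\<lambda>(t, x, y). G t x y)"
  have "continuous_on UNIV (\<lambda>q::real\<times>real. (fst q, x, snd q))" by (intro continuous_intros)
  from continuous_on_compose2[OF c this] show ?thesis by (simp add: case_prod_unfold)
qed
lemma cfix3: fixes G :: "real \<Rightarrow> real \<Rightarrow> real \<Rightarrow> real" shows "continuous_on UNIV (\<lambda>(t, x, y). G t x y) \<Longrightarrow> continuous_on UNIV (\<lambda>(a, b). (G a b y :: real))"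
proof -
  assume c: "continuous_on UNIV (\<lambda>(t, x, y). G t x y)"
  have "continuous_on UNIV (\<lambda>q::real\<times>real. (fst q, snd q, y))" by (intro continuous_intros)
  from continuous_on_compose2[OF c this] show ?thesis by (simp add: case_prod_unfold)
qed

lemma sw_xy[simp]: "smooth f \<Longrightarrow> py (px f) t x y = px (py f) t x y"
proof -
  assume f: "smooth f"
  have "deriv (\<lambda>s. deriv (\<lambda>r. f t r s) x) y = deriv (\<lambda>s. deriv (\<lambda>r. f t s r) y) x"
  proof (rule schwarz[where F="\<lambda>a b. f t a b"])
    show "continuous_on UNIV (\<lambda>(a, b). deriv (\<lambda>s. deriv (\<lambda>r. f t r s) a) b)"
      using cfix1[OF smooth_cont[OF smooth_py[OF smooth_px[OF f]]], of t] by (simp add: px_def py_def)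
    show "continuous_on UNIV (\<lambda>(a, b). deriv (\<lambda>s. deriv (\<lambda>r. f t s r) b) a)"
      using cfix1[OF smooth_cont[OF smooth_px[OF smooth_py[OF f]]], of t] by (simp add: px_def py_def)
  qed (use smooth_dx[OF f] smooth_dy[OF f] smooth_dy[OF smooth_px[OF f]] smooth_dx[OF smooth_py[OF f]] in \<open>simp_all add: px_def py_def\<close>)
  then show ?thesis by (simp add: px_def py_def)
qed
lemma sw_tx[simp]: "smooth f \<Longrightarrow> pt (px f) t x y = px (pt f) t x y"
proof -
  assume f: "smooth f"
  have "deriv (\<lambda>s. deriv (\<lambda>r. f r s y) t) x = deriv (\<lambda>s. deriv (\<lambda>r. f s r y) x) t"
  proof (rule schwarz[where F="\<lambda>a b. f a b y"])
    show "continuous_on UNIV (\<lambda>(a, b). deriv (\<lambda>s. deriv (\<lambda>r. f r s y) a) b)"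
      using cfix3[OF smooth_cont[OF smooth_px[OF smooth_pt[OF f]]], of y] by (simp add: px_def pt_def)
    show "continuous_on UNIV (\<lambda>(a, b). deriv (\<lambda>s. deriv (\<lambda>r. f s r y) b) a)"
      using cfix3[OF smooth_cont[OF smooth_pt[OF smooth_px[OF f]]], of y] by (simp add: px_def pt_def)
  qed (use smooth_dt[OF f] smooth_dx[OF f] smooth_dx[OF smooth_pt[OF f]] smooth_dt[OF smooth_px[OF f]] in \<open>simp_all add: px_def pt_def\<close>)
  then show ?thesis by (simp add: px_def pt_def)
qed
lemma sw_ty[simp]: "smooth f \<Longrightarrow> pt (py f) t x y = py (pt f) t x y"
proof -
  assume f: "smooth f"
  have "deriv (\<lambda>s. deriv (\<lambda>r. f r x s) t) y = deriv (\<lambda>s. deriv (\<lambda>r. f s x r) y) t"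
  proof (rule schwarz[where F="\<lambda>a b. f a x b"])
    show "continuous_on UNIV (\<lambda>(a, b). deriv (\<lambda>s. deriv (\<lambda>r. f r x s) a) b)"
      using cfix2[OF smooth_cont[OF smooth_py[OF smooth_pt[OF f]]], of x] by (simp add: py_def pt_def)
    show "continuous_on UNIV (\<lambda>(a, b). deriv (\<lambda>s. deriv (\<lambda>r. f s x r) b) a)"
      using cfix2[OF smooth_cont[OF smooth_pt[OF smooth_py[OF f]]], of x] by (simp add: py_def pt_def)
  qed (use smooth_dt[OF f] smooth_dy[OF f] smooth_dy[OF smooth_pt[OF f]] smooth_dt[OF smooth_py[OF f]] in \<open>simp_all add: py_def pt_def\<close>)
  then show ?thesis by (simp add: py_def pt_def)
qed

lemma sw_xy_fun[simp]: "smooth f \<Longrightarrow> py (px f) = px (py f)" by (intro ext) simp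
lemma sw_tx_fun[simp]: "smooth f \<Longrightarrow> pt (px f) = px (pt f)" by (intro ext) simp
lemma sw_ty_fun[simp]: "smooth f \<Longrightarrow> pt (py f) = py (pt f)" by (intro ext) simp



lemma core:
  fixes u1 u2 w z W p r :: field and g :: real
  assumes s: "smooth u1" "smooth u2" "smooth w" "smooth z" "smooth W" "smooth p" "smooth r"
  and mx: "\<forall>t x y.
        pt (\<lambda>t x y. u1 t x y + w t x y * px z t x y) t x y
        + lie1x u1 u2 (\<lambda>t x y. u1 t x y + w t x y * px z t x y)
                      (\<lambda>t x y. u2 t x y + w t x y * py z t x y) t x y
        = px (\<lambda>t x y. ((u1 t x y)\<^sup>2 + (u2 t x y)\<^sup>2 + (W t x y)\<^sup>2) / 2 - g * z t x y) t x y
          - px p t x y * r t x y"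
  and my: "\<forall>t x y.
        pt (\<lambda>t x y. u2 t x y + w t x y * py z t x y) t x y
        + lie1y u1 u2 (\<lambda>t x y. u1 t x y + w t x y * px z t x y)
                      (\<lambda>t x y. u2 t x y + w t x y * py z t x y) t x y
        = py (\<lambda>t x y. ((u1 t x y)\<^sup>2 + (u2 t x y)\<^sup>2 + (W t x y)\<^sup>2) / 2 - g * z t x y) t x y
          - py p t x y * r t x y"
  shows "pt (\<lambda>t x y. curl u1 u2 t x y + jac w z t x y) t x y
          + lie2 u1 u2 (\<lambda>t x y. curl u1 u2 t x y + jac w z t x y) t x y
          = - jac r p t x y"
proof -
  define A1 where "A1 = (\<lambda>t x y. u1 t x y + w t x y * px z t x y)"
  define A2 where "A2 = (\<lambda>t x y. u2 t x y + w t x y * py z t x y)"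
  define Phi where "Phi = (\<lambda>t x y. ((u1 t x y)\<^sup>2 + (u2 t x y)\<^sup>2 + (W t x y)\<^sup>2) / 2 - g * z t x y)"
  define L1 where "L1 = (\<lambda>t x y. pt A1 t x y + lie1x u1 u2 A1 A2 t x y)"
  define L2 where "L2 = (\<lambda>t x y. pt A2 t x y + lie1y u1 u2 A1 A2 t x y)"
  define R1 where "R1 = (\<lambda>t x y. px Phi t x y - px p t x y * r t x y)"
  define R2 where "R2 = (\<lambda>t x y. py Phi t x y - py p t x y * r t x y)"
  have e1: "L1 = R1" using mx unfolding L1_def R1_def A1_def A2_def Phi_def by (intro ext) simp
  have e2: "L2 = R2" using my unfolding L2_def R2_def A1_def A2_def Phi_def by (intro ext) simp
  have q: "px L2 t x y - py L1 t x y = px R2 t x y - py R1 t x y" using e1 e2 by simp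
  have hL: "px L2 t x y - py L1 t x y = pt (\<lambda>t x y. curl u1 u2 t x y + jac w z t x y) t x y
          + lie2 u1 u2 (\<lambda>t x y. curl u1 u2 t x y + jac w z t x y) t x y"
    unfolding L1_def L2_def A1_def A2_def
    apply (simp add: s lie1x_def lie1y_def adv_def lie2_def curl_def jac_def)
    apply (simp add: algebra_simps)
    done
  have hR: "px R2 t x y - py R1 t x y = - jac r p t x y"
    unfolding R1_def R2_def Phi_def
    by (simp add: s jac_def power2_eq_square)
  show ?thesis using q hL hR by simp
qed

theorem mainTheorem6:
  fixes u1 u2 D rho zeta what wtil p :: field and eps g :: real
  assumes smooth: "smooth u1" "smooth u2" "smooth D" "smooth rho" "smooth zeta"
      "smooth what" "smooth wtil" "smooth p"
    and rho_nz: "\<forall>t x y. rho t x y \<noteq> 0"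
    and D_one: "\<forall>t x y. D t x y = 1"
    and wtil_def: "\<forall>t x y. wtil t x y =
        what t x y / (1 + eps * ((px zeta t x y)\<^sup>2 + (py zeta t x y)\<^sup>2))"
    and motion_x: "\<forall>t x y.
        pt (\<lambda>t x y. u1 t x y + wtil t x y * px zeta t x y) t x y
        + lie1x u1 u2 (\<lambda>t x y. u1 t x y + wtil t x y * px zeta t x y)
                      (\<lambda>t x y. u2 t x y + wtil t x y * py zeta t x y) t x y
        = px (\<lambda>t x y. ((u1 t x y)\<^sup>2 + (u2 t x y)\<^sup>2 + (what t x y)\<^sup>2) / 2 - g * zeta t x y) t x y
          - px p t x y / rho t x y"
    and motion_y: "\<forall>t x y.
        pt (\<lambda>t x y. u2 t x y + wtil t x y * py zeta t x y) t x y
        + lie1y u1 u2 (\<lambda>t x y. u1 t x y + wtil t x y * px zeta t x y)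
                      (\<lambda>t x y. u2 t x y + wtil t x y * py zeta t x y) t x y
        = py (\<lambda>t x y. ((u1 t x y)\<^sup>2 + (u2 t x y)\<^sup>2 + (what t x y)\<^sup>2) / 2 - g * zeta t x y) t x y
          - py p t x y / rho t x y"
    and continuity: "\<forall>t x y. pt D t x y + px (\<lambda>t x y. D t x y * u1 t x y) t x y
        + py (\<lambda>t x y. D t x y * u2 t x y) t x y = 0"
    and buoyancy: "\<forall>t x y. pt rho t x y + adv u1 u2 rho t x y = 0"
    and elevation: "\<forall>t x y. pt zeta t x y + adv u1 u2 zeta t x y =
        what t x y * (1 + eps * ((px zeta t x y)\<^sup>2 + (py zeta t x y)\<^sup>2))"
    and vertical: "\<forall>t x y. pt wtil t x y + adv u1 u2 wtil t x y =
        - g + 2 * eps / (D t x y * rho t x y) *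
          (px (\<lambda>t x y. what t x y * (D t x y * rho t x y * wtil t x y) * px zeta t x y) t x y
         + py (\<lambda>t x y. what t x y * (D t x y * rho t x y * wtil t x y) * py zeta t x y) t x y)"
  shows "(\<forall>t x y.
            pt (\<lambda>t x y. curl u1 u2 t x y + jac wtil zeta t x y) t x y
          + lie2 u1 u2 (\<lambda>t x y. curl u1 u2 t x y + jac wtil zeta t x y) t x y
          = - jac (\<lambda>t x y. 1 / rho t x y) p t x y)
       \<and> (\<forall>psi. smooth psi \<and> (\<forall>t x y. u1 t x y = - py psi t x y \<and> u2 t x y = px psi t x y) \<longrightarrow>
            (\<forall>t x y.
               pt (\<lambda>t x y. lap psi t x y + jac wtil zeta t x y) t x y
             + jac psi (\<lambda>t x y. lap psi t x y + jac wtil zeta t x y) t x y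
             = - jac (\<lambda>t x y. 1 / rho t x y) p t x y))"
proof -
  have sr: "smooth (\<lambda>t x y. 1 / rho t x y)" using smooth_inv[OF smooth(4) rho_nz] .
  have P1: "\<forall>t x y.
            pt (\<lambda>t x y. curl u1 u2 t x y + jac wtil zeta t x y) t x y
          + lie2 u1 u2 (\<lambda>t x y. curl u1 u2 t x y + jac wtil zeta t x y) t x y
          = - jac (\<lambda>t x y. 1 / rho t x y) p t x y"
  proof (intro allI)
    fix t x y
    show "pt (\<lambda>t x y. curl u1 u2 t x y + jac wtil zeta t x y) t x y
          + lie2 u1 u2 (\<lambda>t x y. curl u1 u2 t x y + jac wtil zeta t x y) t x y
          = - jac (\<lambda>t x y. 1 / rho t x y) p t x y"
      by (rule core[where W=what and g=g, OF smooth(1,2,7,5,6,8) sr])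
         (use motion_x motion_y in simp_all)
  qed
  have De: "D = (\<lambda>t x y. 1)" using D_one by (intro ext) simp
  have div: "px u1 t x y + py u2 t x y = 0" for t x y
    using continuity unfolding De by simp
  have P2: "pt (\<lambda>t x y. lap psi t x y + jac wtil zeta t x y) t x y
             + jac psi (\<lambda>t x y. lap psi t x y + jac wtil zeta t x y) t x y
             = - jac (\<lambda>t x y. 1 / rho t x y) p t x y"
    if sp: "smooth psi" and hu: "\<forall>t x y. u1 t x y = - py psi t x y \<and> u2 t x y = px psi t x y"
    for psi t x y
  proof -
    have u1e: "u1 = (\<lambda>t x y. - py psi t x y)" using hu by (intro ext) simp
    have u2e: "u2 = px psi" using hu by (intro ext) simp
    define Q where "Q = (\<lambda>t x y. curl u1 u2 t x y + jac wtil zeta t x y)"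
    have lq: "(\<lambda>t x y. lap psi t x y + jac wtil zeta t x y) = Q"
      unfolding Q_def by (intro ext) (simp add: u1e u2e curl_def lap_def sp)
    have "jac psi Q t x y = adv u1 u2 Q t x y"
      using hu by (simp add: jac_def adv_def algebra_simps)
    moreover have "lie2 u1 u2 Q t x y = adv u1 u2 Q t x y"
      using div[of t x y] by (simp add: lie2_def)
    ultimately show ?thesis unfolding lq using P1[unfolded Q_def[symmetric], rule_format, of t x y] by simp
  qed
  show ?thesis using P1 P2 by blast
qed

end
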